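(* Let $I = \{i_1 < \cdots < i_k\} \subset [n-1]$, $0 \leq m \leq n$ and $r \geq 0$. Then $\partial_{e_r(x_1, \ldots, x_{n-m})}\, \mathrm{d}_{i_1} \cdots \mathrm{d}_{i_k} \Delta_n$ equals the sum of the weights of all marked $n$-staircases with exactly $m$ grey columns, exactly $r$ marks $\circ$, and exactly $k$ columns containing $\times$'s, the numbers of $\times$'s in these columns being $i_1, \ldots, i_k$ in some order.
   Context: Work in $\mathbb{Q}[x_1, \ldots, x_n, \theta_1, \ldots, \theta_n]$ ($x$'s commute, $\theta$'s anticommute, $x_i\theta_j = \theta_j x_i$). $\Delta_n = \prod_{i<j}(x_j - x_i)$; $\partial_g$ substitutes $\partial_{x_i}$ for $x_i$ in $g$; $\mathrm{d}_i \omega = \sum_{j=1}^n \theta_j \partial_{x_j}^i \omega$; $e_r(x_1,\ldots,x_p)$ is the elementary symmetric polynomial ($e_0 = 1$, $e_r = 0$ for $r > p$). An $n$-staircase is a sequence $(h_1, \ldots, h_n)$ that is a permutation of $\{0, 1, \ldots, n-1\}$, pictured as $n$ bottom-justified columns where column $\ell$ has cells at heights $1, \ldots, h_\ell$. A marked $n$-staircase with $m$ grey columns consists of an $n$-staircase together with integers $a_\ell \geq 0$ and $b_\ell \in \{0,1\}$ for each column $\ell$, with $a_\ell + b_\ell \leq h_\ell$ and $b_\ell = 0$ for the last $m$ columns $\ell > n-m$ (the grey columns); column $\ell$ has $\times$'s in its top $a_\ell$ cells (heights $h_\ell - a_\ell + 1, \ldots, h_\ell$) and, if $b_\ell = 1$,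 an $\circ$ in the cell at height $h_\ell - a_\ell$. Let $c_1 < \cdots < c_p$ be the columns with $a_{c} > 0$. The weight of the marked staircase is the product of: the monomial $x_1^{h_1 - a_1 - b_1} \cdots x_n^{h_n - a_n - b_n} \theta_{c_1} \cdots \theta_{c_p}$; the sign $(-1)^{\#\{i<j : h_i > h_j\}} \operatorname{sgn} \prod_{1 \leq v < w \leq p}(a_{c_w} - a_{c_v})$ (where $\operatorname{sgn}$ is the signum function, so this is $0$ if two $a_{c_v}$ coincide); and the order, which is the product of the heights of all cells containing a $\times$ or an $\circ$. *)

theory Defs
  imports Complex_Main "HOL-Library.Poly_Mapping" "HOL-Library.Multiset"
begin

text \<open>Polynomials in commuting variables x_1, x_2, ... over Q: finitely supported
  maps from exponent vectors exponent vectors to rat.  Variables are indexed by positive naturals.\<close>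
type_synonym xpoly = "(nat \<Rightarrow>\<^sub>0 nat) \<Rightarrow>\<^sub>0 rat"

text \<open>Superpolynomials in Q[x_1..,theta_1..]: every element is uniquely
  sum over finite S of theta_S * f_S(x), where theta_S = theta_{s_1} ... theta_{s_p} for
  s_1 < ... < s_p the elements of S.  We store the map S \<mapsto> f_S.\<close>
type_synonym spoly = "nat set \<Rightarrow> xpoly"

definition X :: "nat \<Rightarrow> xpoly" where
  "X j = Poly_Mapping.single (Poly_Mapping.single j 1) 1"

definition xderiv :: "nat \<Rightarrow> xpoly \<Rightarrow> xpoly" where
  "xderiv j f = Abs_poly_mapping
     (\<lambda>(e :: nat \<Rightarrow>\<^sub>0 nat). of_nat (Poly_Mapping.lookup e j + 1) * Poly_Mapping.lookup f (e + Poly_Mapping.single j (1::nat)))"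

definition xdiff_mono :: "(nat \<Rightarrow>\<^sub>0 nat) \<Rightarrow> xpoly \<Rightarrow> xpoly" where
  "xdiff_mono \<alpha> = foldr (\<lambda>j h. (xderiv j ^^ Poly_Mapping.lookup \<alpha> j) \<circ> h)
                        (sorted_list_of_set (Poly_Mapping.keys \<alpha>)) id"

definition xdiff_op :: "xpoly \<Rightarrow> xpoly \<Rightarrow> xpoly" where
  "xdiff_op g f = (\<Sum>\<alpha>\<in>Poly_Mapping.keys g. Poly_Mapping.single 0 (Poly_Mapping.lookup g \<alpha>) * xdiff_mono \<alpha> f)"

definition sdiff_op :: "xpoly \<Rightarrow> spoly \<Rightarrow> spoly" where
  "sdiff_op g \<omega> = (\<lambda>S. xdiff_op g (\<omega> S))"

definition esym :: "nat \<Rightarrow> nat \<Rightarrow> xpoly" where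
  "esym r p = (\<Sum>S\<in>{S. S \<subseteq> {1..p} \<and> card S = r}. \<Prod>s\<in>S. X s)"

definition Delta :: "nat \<Rightarrow> xpoly" where
  "Delta n = (\<Prod>(i,j)\<in>{(i,j). 1 \<le> i \<and> i < j \<and> j \<le> n}. X j - X i)"

definition xpart :: "xpoly \<Rightarrow> spoly" where
  "xpart f = (\<lambda>S. if S = {} then f else 0)"

text \<open>Left multiplication by theta_j:
  theta_j theta_T = (-1)^{#{t\<in>T. t<j}} theta_{T \<union> {j}} if j \<notin> T, and 0 otherwise.\<close>
definition theta_mult :: "nat \<Rightarrow> spoly \<Rightarrow> spoly" where
  "theta_mult j \<omega> = (\<lambda>S. if j \<in> S
        then (-1) ^ card {s\<in>S. s < j} * \<omega> (S - {j}) else 0)"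

definition dop :: "nat \<Rightarrow> nat \<Rightarrow> spoly \<Rightarrow> spoly" where
  "dop n i \<omega> = (\<lambda>S. \<Sum>j\<in>{1..n}. theta_mult j (\<lambda>T. (xderiv j ^^ i) (\<omega> T)) S)"

text \<open>Marked n-staircases with m grey columns, encoded as (h, a, b) with columns 1..n;
  all three functions are 0 outside {1..n}.\<close>
definition marked_staircases :: "nat \<Rightarrow> nat \<Rightarrow> ((nat \<Rightarrow> nat) \<times> (nat \<Rightarrow> nat) \<times> (nat \<Rightarrow> nat)) set" where
  "marked_staircases n m = {(h, a, b).
      bij_betw h {1..n} {0..<n} \<and>
      (\<forall>l. l \<notin> {1..n} \<longrightarrow> h l = 0 \<and> a l = 0 \<and> b l = 0) \<and>
      (\<forall>l\<in>{1..n}. b l \<le> 1 \<and> a l + b l \<le> h l \<and> (l > n - m \<longrightarrow> b l = 0))}"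

definition xcols :: "nat \<Rightarrow> (nat \<Rightarrow> nat) \<Rightarrow> nat set" where
  "xcols n a = {l\<in>{1..n}. a l > 0}"

definition inversions :: "nat \<Rightarrow> (nat \<Rightarrow> nat) \<Rightarrow> nat" where
  "inversions n h = card {(i,j). 1 \<le> i \<and> i < j \<and> j \<le> n \<and> h i > h j}"

definition stair_sign :: "nat \<Rightarrow> (nat \<Rightarrow> nat) \<Rightarrow> (nat \<Rightarrow> nat) \<Rightarrow> int" where
  "stair_sign n h a = (-1) ^ inversions n h *
     sgn (\<Prod>(v,w)\<in>{(v,w). v \<in> xcols n a \<and> w \<in> xcols n a \<and> v < w}. int (a w) - int (a v))"

text \<open>Order: product of the heights of the cells carrying a cross or a circle,
  i.e. heights h-a-b+1, ..., h in each column.\<close>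
definition stair_order :: "nat \<Rightarrow> (nat \<Rightarrow> nat) \<Rightarrow> (nat \<Rightarrow> nat) \<Rightarrow> (nat \<Rightarrow> nat) \<Rightarrow> nat" where
  "stair_order n h a b = (\<Prod>l\<in>{1..n}. \<Prod>t\<in>{h l - a l - b l <.. h l}. t)"

definition stair_weight :: "nat \<Rightarrow> ((nat \<Rightarrow> nat) \<times> (nat \<Rightarrow> nat) \<times> (nat \<Rightarrow> nat)) \<Rightarrow> spoly" where
  "stair_weight n M = (case M of (h, a, b) \<Rightarrow>
     (\<lambda>S. if S = xcols n a then
        of_int (stair_sign n h a * int (stair_order n h a b)) *
        (\<Prod>l\<in>{1..n}. X l ^ (h l - a l - b l))
      else 0))"

end

theory Submission
  imports Defs "Jordan_Normal_Form.Determinant"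
begin

definition invs :: "(nat \<Rightarrow> nat) \<Rightarrow> nat \<Rightarrow> (nat \<times> nat) set" where
  "invs p n = {(i,j). i < j \<and> j < n \<and> p j < p i}"

lemma finite_invs: "finite (invs p n)"
proof -
  have "invs p n \<subseteq> {0..<n} \<times> {0..<n}" unfolding invs_def by auto
  then show ?thesis by (rule finite_subset) auto
qed

lemma incr_chain:
  fixes p :: "nat \<Rightarrow> nat"
  assumes "\<forall>k. Suc k < n \<longrightarrow> p k < p (Suc k)"
  shows "i < j \<Longrightarrow> j < n \<Longrightarrow> p i < p j"
proof (induction j)
  case 0 then show ?case by simp
next
  case (Suc j)
  show ?case
  proof (cases "i = j")
    case True then show ?thesis using assms Suc by auto
  next
    case False
    then have "p i < p j" using Suc by auto
    also have "p j < p (Suc j)" using assms Suc by auto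
    finally show ?thesis .
  qed
qed

lemma perm_incr_id:
  assumes p: "p permutes {0..<n}" and inc: "\<forall>k. Suc k < n \<longrightarrow> p k < p (Suc k)"
  shows "p = id"
proof -
  have ge: "i \<le> p i" if "i < n" for i
    using that
  proof (induction i)
    case 0 then show ?case by simp
  next
    case (Suc i)
    then have "i \<le> p i" by simp
    moreover have "p i < p (Suc i)" using inc Suc by auto
    ultimately show ?case by simp
  qed
  have sums: "(\<Sum>i\<in>{0..<n}. p i) = (\<Sum>i\<in>{0..<n}. i)"
  proof -
    have "(\<Sum>i\<in>{0..<n}. p i) = sum id (p ` {0..<n})"
      using sum.reindex[OF permutes_inj_on[OF p, of "{0..<n}"], of id] by simp
    also have "p ` {0..<n} = {0..<n}" using permutes_image[OF p] .
    finally show ?thesis by simp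
  qed
  have eq: "p i = i" if "i < n" for i
  proof (rule ccontr)
    assume "p i \<noteq> i"
    then have "i < p i" using ge[OF that] by simp
    then have "(\<Sum>i\<in>{0..<n}. i) < (\<Sum>i\<in>{0..<n}. p i)"
      using ge that by (intro sum_strict_mono_ex1) auto
    then show False using sums by simp
  qed
  show ?thesis
  proof
    fix i show "p i = id i"
      using eq permutes_not_in[OF p, of i] by (cases "i < n") auto
  qed
qed

lemma invs_swap:
  assumes k: "Suc k < n" and d: "p (Suc k) < p k"
  shows "invs (p \<circ> Transposition.transpose k (Suc k)) n =
         (\<lambda>(i,j). (Transposition.transpose k (Suc k) i, Transposition.transpose k (Suc k) j)) ` (invs p n - {(k, Suc k)})"
  (is "?L = ?f ` ?R")
proof
  show "?L \<subseteq> ?f ` ?R"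
  proof
    fix x assume x: "x \<in> ?L"
    obtain i j where ij: "x = (i,j)" by (cases x)
    let ?t = "Transposition.transpose k (Suc k)"
    have "(?t i, ?t j) \<in> ?R" using x k d unfolding ij invs_def
      by (auto simp: Transposition.transpose_def split: if_splits)
    moreover have "x = ?f (?t i, ?t j)" using ij by simp
    ultimately show "x \<in> ?f ` ?R" by blast
  qed
next
  show "?f ` ?R \<subseteq> ?L"
    using k d unfolding invs_def
    by (auto simp: Transposition.transpose_def split: if_splits)
qed

lemma sign_invs:
  assumes "p permutes {0..<n}"
  shows "sign p = (-1::int) ^ card (invs p n)"
  using assms
proof (induction "card (invs p n)" arbitrary: p)
  case 0
  have "\<forall>k. Suc k < n \<longrightarrow> p k < p (Suc k)"
  proof (intro allI impI, rule ccontr)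
    fix k assume k: "Suc k < n" "\<not> p k < p (Suc k)"
    have "p k \<noteq> p (Suc k)" using permutes_inj[OF 0(2)] by (auto dest: injD)
    then have "(k, Suc k) \<in> invs p n" using k unfolding invs_def by auto
    then show False using 0(1) finite_invs by (metis card_0_eq empty_iff)
  qed
  then have "p = id" using perm_incr_id 0(2) by blast
  then show ?case using 0(1) by simp
next
  case (Suc N)
  have "\<exists>k. Suc k < n \<and> p (Suc k) < p k"
  proof (rule ccontr)
    assume "\<not> ?thesis"
    then have inc: "\<forall>k. Suc k < n \<longrightarrow> p k < p (Suc k)"
      using permutes_inj[OF Suc(3)] by (metis injD linorder_neqE_nat n_not_Suc_n)
    have "invs p n = {}" unfolding invs_def using incr_chain[OF inc] by force
    then show False using Suc(2) by simp
  qed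
  then obtain k where k: "Suc k < n" "p (Suc k) < p k" by blast
  let ?t = "Transposition.transpose k (Suc k)"
  define q where "q = p \<circ> ?t"
  have qp: "q permutes {0..<n}" unfolding q_def
    using Suc(3) k by (intro permutes_compose permutes_swap_id) auto
  have inj: "inj_on (\<lambda>(i,j). (?t i, ?t j)) X" for X
    by (auto simp: inj_on_def transpose_eq_iff)
  have "card (invs q n) = card (invs p n - {(k, Suc k)})"
    unfolding q_def invs_swap[OF k] by (rule card_image[OF inj])
  also have "\<dots> = N" using Suc(2) k finite_invs unfolding invs_def by simp
  finally have cq: "card (invs q n) = N" .
  have sq: "sign q = (-1)^N" using Suc(1)[OF cq[symmetric] qp] cq by simp
  have "sign q = sign p * sign ?t" unfolding q_def
    by (rule sign_compose) (use Suc(3) in \<open>auto intro: permutes_imp_permutation permutation_swap_id\<close>)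
  then have "sign q = - sign p" by (simp add: sign_swap_id)
  then show ?case using sq by (simp add: Suc(2)[symmetric])
qed

lemma pairs_Suc:
  "{(i,j). i < j \<and> j < Suc k} = (\<lambda>j. (0::nat, Suc j)) ` {0..<k} \<union> (\<lambda>(i,j). (Suc i, Suc j)) ` {(i,j). i < j \<and> j < k}"
proof (intro equalityI subsetI)
  fix x assume "x \<in> {(i,j). i < j \<and> j < Suc k}"
  then obtain i j where x: "x = (i,j)" "i < j" "j < Suc k" by auto
  then obtain j' where j': "j = Suc j'" by (cases j) auto
  show "x \<in> (\<lambda>j. (0::nat, Suc j)) ` {0..<k} \<union> (\<lambda>(i,j). (Suc i, Suc j)) ` {(i,j). i < j \<and> j < k}"
  proof (cases i)
    case 0 then show ?thesis using x j' by auto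
  next
    case (Suc i') then have "x = (\<lambda>(i,j). (Suc i, Suc j)) (i', j')" using x j' by simp
    moreover have "(i', j') \<in> {(i,j). i < j \<and> j < k}" using x j' Suc by simp
    ultimately show ?thesis by blast
  qed
qed auto

lemma vander_det:
  fixes xs :: "'a::comm_ring_1 list"
  shows "det (mat (length xs) (length xs) (\<lambda>(i,j). xs!j ^ i)) = (\<Prod>(i,j)\<in>{(i,j). i < j \<and> j < length xs}. xs!j - xs!i)"
proof (induction xs)
  case Nil
  show ?case by (simp add: det_def)
next
  case (Cons x ys)
  define k where "k = length ys"
  define n where "n = Suc k"
  define A where "A = mat n n (\<lambda>(i,j). (x#ys)!j ^ i)"
  define L where "L = mat n n (\<lambda>(i,j). (if j = i then 1 else 0) - (if i > 0 \<and> j = i - 1 then x else 0) :: 'a)"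
  have A: "A \<in> carrier_mat n n" unfolding A_def by simp
  have L: "L \<in> carrier_mat n n" unfolding L_def by simp
  have detL: "det L = 1"
  proof -
    have "det L = prod_list (diag_mat L)"
      by (rule det_lower_triangular[OF _ L]) (auto simp: L_def)
    also have "diag_mat L = map (\<lambda>_. 1) [0..<n]"
      unfolding diag_mat_def L_def by auto
    finally show ?thesis by (simp add: map_replicate_const)
  qed
  define B where "B = L * A"
  have B: "B \<in> carrier_mat n n" unfolding B_def using L A by simp
  have Bij: "B $$ (i,j) = (x#ys)!j ^ i - (if i > 0 then x * (x#ys)!j ^ (i - 1) else 0)"
    if ij: "i < n" "j < n" for i j
  proof -
    have "B $$ (i,j) = (\<Sum>l\<in>{0..<n}. L $$ (i,l) * A $$ (l,j))"
      unfolding B_def using ij L A by (simp add: scalar_prod_def)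
    also have "\<dots> = (\<Sum>l\<in>{0..<n}. (if l = i then A $$ (l,j) else 0) - (if i > 0 \<and> l = i - 1 then x * A $$ (l,j) else 0))"
      by (rule sum.cong) (use ij in \<open>auto simp: L_def algebra_simps\<close>)
    also have "\<dots> = A $$ (i,j) - (if i > 0 then x * A $$ (i - 1,j) else 0)"
      using ij by (simp add: sum_subtractf)
    also have "\<dots> = (x#ys)!j ^ i - (if i > 0 then x * (x#ys)!j ^ (i - 1) else 0)"
      using ij by (simp add: A_def)
    finally show ?thesis .
  qed
  have detB: "det B = det A" unfolding B_def det_mult[OF L A] detL by simp
  have B0: "B $$ (i,0) = (if i = 0 then 1 else 0)" if "i < n" for i
  proof -
    have "B $$ (i,0) = x ^ i - (if i > 0 then x * x ^ (i - 1) else 0)"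
      using Bij[OF that] n_def by simp
    then show ?thesis by (cases i) auto
  qed
  have "det B = (\<Sum>i<n. B $$ (i,0) * cofactor B i 0)"
    by (rule laplace_expansion_column[OF B]) (simp add: n_def)
  also have "\<dots> = (\<Sum>i<n. if i = 0 then cofactor B i 0 else 0)"
    by (rule sum.cong) (auto simp: B0)
  also have "\<dots> = cofactor B 0 0" by (simp add: n_def)
  also have "\<dots> = det (mat_delete B 0 0)" by (simp add: cofactor_def)
  finally have detB2: "det B = det (mat_delete B 0 0)" .
  define C where "C = mat k k (\<lambda>(i,j). ys!j ^ i)"
  define D where "D = mat k k (\<lambda>(i,j). if i = j then ys!j - x else 0)"
  have C: "C \<in> carrier_mat k k" unfolding C_def by simp
  have D: "D \<in> carrier_mat k k" unfolding D_def by simp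
  have MD: "mat_delete B 0 0 = C * D"
  proof (rule eq_matI)
    fix i j assume ij: "i < dim_row (C * D)" "j < dim_col (C * D)"
    then have ij': "i < k" "j < k" using C D by auto
    have "(C * D) $$ (i,j) = (\<Sum>l\<in>{0..<k}. C $$ (i,l) * D $$ (l,j))"
      using ij' C D by (simp add: scalar_prod_def)
    also have "\<dots> = (\<Sum>l\<in>{0..<k}. if l = j then C $$ (i,j) * (ys!j - x) else 0)"
      by (rule sum.cong) (auto simp: D_def ij')
    also have "\<dots> = ys!j ^ i * (ys!j - x)" using ij' by (simp add: C_def)
    finally have cd: "(C * D) $$ (i,j) = ys!j ^ i * (ys!j - x)" .
    have "mat_delete B 0 0 $$ (i,j) = B $$ (Suc i, Suc j)"
      unfolding mat_delete_def using B ij' by (simp add: n_def)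
    also have "\<dots> = ys!j ^ Suc i - x * ys!j ^ i" using Bij[of "Suc i" "Suc j"] ij' by (simp add: n_def)
    finally show "mat_delete B 0 0 $$ (i,j) = (C * D) $$ (i,j)" unfolding cd by (simp add: algebra_simps)
  qed (use B C D in \<open>auto simp: n_def\<close>)
  have detD: "det D = (\<Prod>j\<in>{0..<k}. ys!j - x)"
  proof -
    have "det D = prod_list (diag_mat D)"
      by (rule det_lower_triangular[OF _ D]) (auto simp: D_def)
    also have "diag_mat D = map (\<lambda>j. ys!j - x) [0..<k]"
      unfolding diag_mat_def D_def by auto
    finally show ?thesis by (simp add: prod.list_conv_set_nth)
  qed
  have IH: "det C = (\<Prod>(i,j)\<in>{(i,j). i < j \<and> j < k}. ys!j - ys!i)"
    using Cons.IH unfolding C_def k_def .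
  have "det (mat (length (x#ys)) (length (x#ys)) (\<lambda>(i,j). (x#ys)!j ^ i)) = det A"
    unfolding A_def n_def k_def by simp
  also have "\<dots> = det C * det D" using detB detB2 MD det_mult[OF C D] by simp
  also have "\<dots> = (\<Prod>j\<in>{0..<k}. ys!j - x) * (\<Prod>(i,j)\<in>{(i,j). i < j \<and> j < k}. ys!j - ys!i)"
    using IH detD by (simp add: mult.commute)
  also have "\<dots> = (\<Prod>(i,j)\<in>{(i,j). i < j \<and> j < length (x#ys)}. (x#ys)!j - (x#ys)!i)"
  proof -
    have fin: "finite {(i,j). i < j \<and> j < k}"
      by (rule finite_subset[of _ "{0..<k} \<times> {0..<k}"]) auto
    have "(\<Prod>(i,j)\<in>{(i,j). i < j \<and> j < length (x#ys)}. (x#ys)!j - (x#ys)!i)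
      = (\<Prod>(i,j)\<in>(\<lambda>j. (0::nat, Suc j)) ` {0..<k} \<union> (\<lambda>(i,j). (Suc i, Suc j)) ` {(i,j). i < j \<and> j < k}. (x#ys)!j - (x#ys)!i)"
      by (simp add: pairs_Suc k_def)
    also have "\<dots> = (\<Prod>(i,j)\<in>(\<lambda>j. (0::nat, Suc j)) ` {0..<k}. (x#ys)!j - (x#ys)!i) *
        (\<Prod>(i,j)\<in>(\<lambda>(i,j). (Suc i, Suc j)) ` {(i,j). i < j \<and> j < k}. (x#ys)!j - (x#ys)!i)"
      by (rule prod.union_disjoint) (use fin in auto)
    also have "\<dots> = (\<Prod>j\<in>{0..<k}. ys!j - x) * (\<Prod>(i,j)\<in>{(i,j). i < j \<and> j < k}. ys!j - ys!i)"
      by (subst prod.reindex, force simp: inj_on_def, subst prod.reindex, force simp: inj_on_def)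
         (simp add: case_prod_beta)
    finally show ?thesis by simp
  qed
  finally show ?case .
qed

definition Hs :: "nat \<Rightarrow> (nat \<Rightarrow> nat) set" where
  "Hs n = {h. bij_betw h {1..n} {0..<n} \<and> (\<forall>l. l \<notin> {1..n} \<longrightarrow> h l = 0)}"

definition monoX :: "nat \<Rightarrow> (nat \<Rightarrow> nat) \<Rightarrow> xpoly" where
  "monoX n g = (\<Prod>l\<in>{1..n}. X l ^ g l)"

lemma Delta_det: "Delta n = det (mat n n (\<lambda>(i,j). (map X [1..<Suc n])!j ^ i))"
proof -
  have "det (mat n n (\<lambda>(i,j). (map X [1..<Suc n])!j ^ i)) =
     (\<Prod>(i,j)\<in>{(i,j). i < j \<and> j < n}. (map X [1..<Suc n])!j - (map X [1..<Suc n])!i)"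
    using vander_det[of "map X [1..<Suc n]"] by (simp del: upt_Suc)
  also have "\<dots> = (\<Prod>(i,j)\<in>{(i,j). i < j \<and> j < n}. X (Suc j) - X (Suc i))"
    by (rule prod.cong) (auto simp del: upt_Suc)
  also have "\<dots> = Delta n" unfolding Delta_def
    by (rule prod.reindex_bij_witness[of _ "\<lambda>(i,j). (i - 1, j - 1)" "\<lambda>(i,j). (Suc i, Suc j)"]) auto
  finally show ?thesis by simp
qed

lemma bij_Suc: "bij_betw Suc {0..<n} {1..n}"
  by (rule bij_betw_imageI) (auto simp: image_iff intro!: bexI[of _ "_ - 1"])

lemma Delta_expand:
  "Delta n = (\<Sum>h\<in>Hs n. of_int ((-1) ^ inversions n h) * monoX n h)"
proof -
  let ?xs = "map X [1..<Suc n]"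
  have V: "mat n n (\<lambda>(i,j). ?xs!j ^ i) \<in> carrier_mat n n" by simp
  have "Delta n = det (transpose_mat (mat n n (\<lambda>(i,j). ?xs!j ^ i)))"
    unfolding Delta_det det_transpose[OF V] ..
  also have "transpose_mat (mat n n (\<lambda>(i,j). ?xs!j ^ i)) = mat n n (\<lambda>(i,j). X (Suc i) ^ j)"
    by (rule eq_matI) (auto simp del: upt_Suc)
  also have "det (mat n n (\<lambda>(i,j). X (Suc i) ^ j)) =
      (\<Sum>p\<in>{p. p permutes {0..<n}}. signof p * (\<Prod>i=0..<n. X (Suc i) ^ p i))"
    by (subst det_def'[of _ n]) auto
  also have "\<dots> = (\<Sum>h\<in>Hs n. of_int ((-1) ^ inversions n h) * monoX n h)"
  proof (rule sum.reindex_bij_witness[of _ "\<lambda>h i. if i < n then h (Suc i) else i"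
                                          "\<lambda>p l. if l \<in> {1..n} then p (l - 1) else 0"])
    fix p assume "p \<in> {p. p permutes {0..<n}}"
    then have p: "p permutes {0..<n}" by simp
    show "(\<lambda>i. if i < n then (if Suc i \<in> {1..n} then p (Suc i - 1) else 0) else i) = p"
      using permutes_not_in[OF p] by (auto simp: fun_eq_iff)
    have bp: "bij_betw p {0..<n} {0..<n}" using permutes_imp_bij[OF p] .
    have "bij_betw (p \<circ> (\<lambda>l. l - 1)) {1..n} {0..<n}"
    proof (rule bij_betw_trans[OF _ bp])
      show "bij_betw (\<lambda>l. l - 1) {1..n} {0..<n}"
        by (rule bij_betw_imageI) (auto simp: inj_on_def image_iff intro!: bexI[of _ "Suc _"])
    qed
    then have "bij_betw (\<lambda>l. if l \<in> {1..n} then p (l - 1) else 0) {1..n} {0..<n}"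
      by (rule bij_betw_cong[THEN iffD1, rotated]) auto
    then show "(\<lambda>l. if l \<in> {1..n} then p (l - 1) else 0) \<in> Hs n" unfolding Hs_def by auto
    let ?h = "\<lambda>l. if l \<in> {1..n} then p (l - 1) else 0"
    have inv: "inversions n ?h = card (invs p n)"
    proof -
      have "{(i,j). 1 \<le> i \<and> i < j \<and> j \<le> n \<and> ?h j < ?h i} = (\<lambda>(i,j). (Suc i, Suc j)) ` invs p n"
      proof (intro equalityI subsetI)
        fix x assume "x \<in> {(i,j). 1 \<le> i \<and> i < j \<and> j \<le> n \<and> ?h j < ?h i}"
        then obtain i j where x: "x = (i,j)" "1 \<le> i" "i < j" "j \<le> n" "p (j-1) < p (i-1)" by auto
        then have "x = (\<lambda>(i,j). (Suc i, Suc j)) (i-1, j-1)" "(i-1,j-1) \<in> invs p n"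
          unfolding invs_def by auto
        then show "x \<in> (\<lambda>(i,j). (Suc i, Suc j)) ` invs p n" by blast
      qed (auto simp: invs_def)
      moreover have "inj_on (\<lambda>(i,j). (Suc i, Suc j)) (invs p n)" by (auto simp: inj_on_def)
      ultimately show ?thesis unfolding inversions_def
        by (simp add: card_image)
    qed
    have mono: "monoX n ?h = (\<Prod>i=0..<n. X (Suc i) ^ p i)"
      unfolding monoX_def
      by (rule prod.reindex_bij_witness[of _ Suc "\<lambda>l. l - 1"]) auto
    show "of_int ((-1) ^ inversions n ?h) * monoX n ?h = signof p * (\<Prod>i=0..<n. X (Suc i) ^ p i)"
      unfolding mono inv sign_invs[OF p] by simp
  next
    fix h assume "h \<in> Hs n"
    then have h: "bij_betw h {1..n} {0..<n}" "\<And>l. l \<notin> {1..n} \<Longrightarrow> h l = 0" unfolding Hs_def by auto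
    show "(\<lambda>l. if l \<in> {1..n} then (if l - 1 < n then h (Suc (l - 1)) else l - 1) else 0) = h"
      using h(2) by (auto simp: fun_eq_iff)
    have "bij_betw (h \<circ> Suc) {0..<n} {0..<n}" by (rule bij_betw_trans[OF bij_Suc h(1)])
    then have "bij_betw (\<lambda>i. if i < n then h (Suc i) else i) {0..<n} {0..<n}"
      by (rule bij_betw_cong[THEN iffD1, rotated]) auto
    then show "(\<lambda>i. if i < n then h (Suc i) else i) \<in> {p. p permutes {0..<n}}"
      by (auto intro!: bij_imp_permutes)
  qed
  finally show ?thesis .
qed

lemma prod_single:
  "finite A \<Longrightarrow> (\<Prod>l\<in>A. Poly_Mapping.single (f l) (c l :: 'b::comm_semiring_1))
     = Poly_Mapping.single (\<Sum>l\<in>A. f l :: 'a::comm_monoid_add) (\<Prod>l\<in>A. c l)"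
  by (induction A rule: finite_induct) (auto simp: mult_single)

lemma X_pow: "X l ^ k = Poly_Mapping.single (Poly_Mapping.single l k) 1"
proof (induction k)
  case 0 then show ?case by simp
next
  case (Suc k)
  then show ?case by (simp add: X_def mult_single single_add[symmetric])
qed

definition ex :: "nat \<Rightarrow> (nat \<Rightarrow> nat) \<Rightarrow> (nat \<Rightarrow>\<^sub>0 nat)" where
  "ex n g = (\<Sum>l\<in>{1..n}. Poly_Mapping.single l (g l))"

lemma lookup_ex: "Poly_Mapping.lookup (ex n g) j = (if j \<in> {1..n} then g j else 0)"
  unfolding ex_def lookup_sum by (simp add: lookup_single when_def)

lemma ex_eq_iff: "ex n g = ex n g' \<longleftrightarrow> (\<forall>j\<in>{1..n}. g j = g' j)"
  by (auto simp: poly_mapping_eq_iff fun_eq_iff lookup_ex)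

lemma monoX_single: "monoX n g = Poly_Mapping.single (ex n g) 1"
  unfolding monoX_def X_pow ex_def by (simp add: prod_single)

definition ind :: "nat set \<Rightarrow> (nat \<Rightarrow>\<^sub>0 nat)" where
  "ind T = (\<Sum>s\<in>T. Poly_Mapping.single s 1)"

lemma lookup_ind: "finite T \<Longrightarrow> Poly_Mapping.lookup (ind T) j = (if j \<in> T then 1 else 0)"
  unfolding ind_def lookup_sum by (simp add: lookup_single when_def)

lemma keys_ind: "finite T \<Longrightarrow> Poly_Mapping.keys (ind T) = T"
  by (auto simp: in_keys_iff lookup_ind split: if_splits)

lemma inj_ind: "inj_on ind {T. finite T}"
proof (rule inj_onI)
  fix S T assume "S \<in> {T. finite T}" "T \<in> {T. finite T}" "ind S = ind T"
  then show "S = T" by (metis keys_ind mem_Collect_eq)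
qed

lemma lookup_xderiv:
  "Poly_Mapping.lookup (xderiv j f) e =
     of_nat (Poly_Mapping.lookup e j + 1) * Poly_Mapping.lookup f (e + Poly_Mapping.single j 1)"
proof -
  let ?g = "\<lambda>e. of_nat (Poly_Mapping.lookup e j + 1) * Poly_Mapping.lookup f (e + Poly_Mapping.single j (1::nat))"
  have "{e. ?g e \<noteq> 0} \<subseteq> (\<lambda>e. e + Poly_Mapping.single j 1) -` {k. Poly_Mapping.lookup f k \<noteq> 0}"
    by auto
  moreover have "finite ((\<lambda>e. e + Poly_Mapping.single j (1::nat)) -` {k. Poly_Mapping.lookup f k \<noteq> 0})"
    by (rule finite_vimageI) (auto simp: inj_on_def)
  ultimately have "finite {e. ?g e \<noteq> 0}" by (rule finite_subset)
  then show ?thesis unfolding xderiv_def by simp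
qed

lemma xderiv_add: "xderiv j (f + g) = xderiv j f + xderiv j g"
  by (rule poly_mapping_eqI) (simp add: lookup_xderiv lookup_add algebra_simps)

lemma xderiv_zero: "xderiv j 0 = 0"
  by (rule poly_mapping_eqI) (simp add: lookup_xderiv)

lemma xderiv_single:
  "xderiv j (Poly_Mapping.single e c) =
     Poly_Mapping.single (e - Poly_Mapping.single j 1) (of_nat (Poly_Mapping.lookup e j) * c)"
proof (rule poly_mapping_eqI)
  fix e'
  show "Poly_Mapping.lookup (xderiv j (Poly_Mapping.single e c)) e' =
        Poly_Mapping.lookup (Poly_Mapping.single (e - Poly_Mapping.single j 1) (of_nat (Poly_Mapping.lookup e j) * c)) e'"
  proof (cases "Poly_Mapping.lookup e j = 0")
    case True
    have "e' + Poly_Mapping.single j 1 \<noteq> e"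
    proof
      assume "e' + Poly_Mapping.single j 1 = e"
      then have "Poly_Mapping.lookup (e' + Poly_Mapping.single j 1) j = Poly_Mapping.lookup e j" by simp
      then show False using True by (simp add: lookup_add)
    qed
    then show ?thesis using True by (simp add: lookup_xderiv lookup_single when_def)
  next
    case False
    have iff: "e' + Poly_Mapping.single j 1 = e \<longleftrightarrow> e - Poly_Mapping.single j 1 = e'"
      using False
      by (auto simp: poly_mapping_eq_iff fun_eq_iff lookup_add lookup_minus lookup_single when_def)
    show ?thesis
    proof (cases "e - Poly_Mapping.single j 1 = e'")
      case True
      then have "Poly_Mapping.lookup e' j + 1 = Poly_Mapping.lookup e j"
        using False by (auto simp: lookup_minus)
      then show ?thesis using True iff by (simp add: lookup_xderiv lookup_single when_def)
    next
      case F2: False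
      then show ?thesis using iff by (simp add: lookup_xderiv lookup_single when_def)
    qed
  qed
qed

definition pf :: "nat \<Rightarrow> nat \<Rightarrow> nat" where
  "pf x i = (if i \<le> x then (\<Prod>t\<in>{x - i<..x}. t) else 0)"

lemma pf_0[simp]: "pf x 0 = 1" by (simp add: pf_def)

lemma pf_Suc: "(x - i) * pf x i = pf x (Suc i)"
proof (cases "Suc i \<le> x")
  case True
  then have "{x - Suc i<..x} = insert (x - i) {x - i<..x}" by auto
  then show ?thesis using True by (simp add: pf_def)
next
  case False
  then show ?thesis by (cases "i = x") (auto simp: pf_def)
qed

lemma xderiv_pow_single:
  "(xderiv j ^^ i) (Poly_Mapping.single e c) =
     Poly_Mapping.single (e - Poly_Mapping.single j i) (of_nat (pf (Poly_Mapping.lookup e j) i) * c)"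
proof (induction i)
  case 0 then show ?case by simp
next
  case (Suc i)
  have ex: "e - Poly_Mapping.single j i - Poly_Mapping.single j (Suc 0) = e - Poly_Mapping.single j (Suc i)"
    by (rule poly_mapping_eqI) (simp add: lookup_minus lookup_single when_def)
  have lk: "Poly_Mapping.lookup (e - Poly_Mapping.single j i) j = Poly_Mapping.lookup e j - i"
    by (simp add: lookup_minus)
  show ?case
    using pf_Suc[of "Poly_Mapping.lookup e j" i]
    by (simp add: Suc xderiv_single ex lk mult.assoc[symmetric] of_nat_mult[symmetric] del: of_nat_mult)
qed

lemma xderiv_sum: "xderiv j (sum f A) = (\<Sum>a\<in>A. xderiv j (f a))"
  by (induction A rule: infinite_finite_induct) (auto simp: xderiv_zero xderiv_add)

lemma funpow_xderiv_add: "(xderiv j ^^ k) (f + g) = (xderiv j ^^ k) f + (xderiv j ^^ k) g"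
  by (induction k) (auto simp: xderiv_add)

lemma funpow_xderiv_zero: "(xderiv j ^^ k) 0 = 0"
  by (induction k) (auto simp: xderiv_zero)

lemma funpow_xderiv_sum: "(xderiv j ^^ k) (sum f A) = (\<Sum>a\<in>A. (xderiv j ^^ k) (f a))"
  by (induction A rule: infinite_finite_induct) (auto simp: funpow_xderiv_zero funpow_xderiv_add)

lemma foldr_add:
  "foldr (\<lambda>j h. (xderiv j ^^ k j) \<circ> h) L id (f + g) =
   foldr (\<lambda>j h. (xderiv j ^^ k j) \<circ> h) L id f + foldr (\<lambda>j h. (xderiv j ^^ k j) \<circ> h) L id g"
  by (induction L) (auto simp: funpow_xderiv_add)

lemma foldr_zero:
  "foldr (\<lambda>j h. (xderiv j ^^ k j) \<circ> h) L id 0 = 0"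
  by (induction L) (auto simp: funpow_xderiv_zero)

lemma foldr_sum:
  "foldr (\<lambda>j h. (xderiv j ^^ k j) \<circ> h) L id (sum f A) = (\<Sum>a\<in>A. foldr (\<lambda>j h. (xderiv j ^^ k j) \<circ> h) L id (f a))"
proof (induction A rule: infinite_finite_induct)
  case (infinite A) then show ?case by (simp only: sum.infinite[OF infinite] foldr_zero)
next
  case empty then show ?case by (simp only: sum.empty foldr_zero)
next
  case (insert x F) then show ?case by (simp only: sum.insert[OF insert(1,2)] foldr_add)
qed

lemma xdiff_mono_sum: "xdiff_mono \<alpha> (sum f A) = (\<Sum>a\<in>A. xdiff_mono \<alpha> (f a))"
  unfolding xdiff_mono_def by (rule foldr_sum)

lemma foldr_single:
  assumes "distinct L" "\<forall>j\<in>set L. k j = 1"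
  shows "foldr (\<lambda>j h. (xderiv j ^^ k j) \<circ> h) L id (Poly_Mapping.single e c) =
    Poly_Mapping.single (e - ind (set L)) (of_nat (\<Prod>s\<in>set L. Poly_Mapping.lookup e s) * c)"
  using assms
proof (induction L)
  case Nil then show ?case by (simp add: ind_def)
next
  case (Cons j L)
  have lk: "Poly_Mapping.lookup (e - ind (set L)) j = Poly_Mapping.lookup e j"
    using Cons.prems by (simp add: lookup_minus lookup_ind)
  have ex: "e - ind (set L) - Poly_Mapping.single j (Suc 0) = e - ind (set (j # L))"
    using Cons.prems
    by (intro poly_mapping_eqI) (auto simp: lookup_minus lookup_ind lookup_single when_def)
  show ?case using Cons
    by (simp add: xderiv_single lk ex mult.assoc)
qed

lemma xdiff_mono_ind:
  assumes "finite T"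
  shows "xdiff_mono (ind T) (Poly_Mapping.single e c) =
    Poly_Mapping.single (e - ind T) (of_nat (\<Prod>s\<in>T. Poly_Mapping.lookup e s) * c)"
proof -
  have "xdiff_mono (ind T) (Poly_Mapping.single e c) =
     foldr (\<lambda>j h. (xderiv j ^^ Poly_Mapping.lookup (ind T) j) \<circ> h) (sorted_list_of_set T) id (Poly_Mapping.single e c)"
    unfolding xdiff_mono_def keys_ind[OF assms] ..
  also have "\<dots> = Poly_Mapping.single (e - ind (set (sorted_list_of_set T)))
       (of_nat (\<Prod>s\<in>set (sorted_list_of_set T). Poly_Mapping.lookup e s) * c)"
    by (rule foldr_single) (auto simp: lookup_ind assms)
  finally show ?thesis using assms by simp
qed

definition Cs :: "nat \<Rightarrow> nat \<Rightarrow> nat set set" where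
  "Cs r p = {S. S \<subseteq> {1..p} \<and> card S = r}"

lemma finite_Cs: "finite (Cs r p)"
  unfolding Cs_def by (rule finite_subset[of _ "Pow {1..p}"]) auto

lemma Cs_finite_elem: "T \<in> Cs r p \<Longrightarrow> finite T"
  unfolding Cs_def by (auto intro: finite_subset)

lemma esym_single: "esym r p = (\<Sum>T\<in>Cs r p. Poly_Mapping.single (ind T) 1)"
  unfolding esym_def Cs_def[symmetric]
proof (rule sum.cong[OF refl])
  fix T assume "T \<in> Cs r p"
  then have "finite T" by (rule Cs_finite_elem)
  then show "(\<Prod>s\<in>T. X s) = Poly_Mapping.single (ind T) 1"
    unfolding X_def ind_def by (simp add: prod_single)
qed

lemma lookup_esym:
  "Poly_Mapping.lookup (esym r p) \<alpha> = (if \<alpha> \<in> ind ` Cs r p then 1 else 0)"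
proof -
  have "Poly_Mapping.lookup (esym r p) \<alpha> = (\<Sum>T\<in>Cs r p. if ind T = \<alpha> then 1 else 0)"
    unfolding esym_single lookup_sum by (simp add: lookup_single when_def)
  also have "\<dots> = (if \<alpha> \<in> ind ` Cs r p then 1 else 0)"
  proof (cases "\<alpha> \<in> ind ` Cs r p")
    case True
    then obtain T0 where T0: "T0 \<in> Cs r p" "\<alpha> = ind T0" by blast
    have "(\<Sum>T\<in>Cs r p. if ind T = \<alpha> then 1 else 0) = (\<Sum>T\<in>Cs r p. if T = T0 then 1 else (0::rat))"
    proof (rule sum.cong[OF refl])
      fix T assume "T \<in> Cs r p"
      then have "ind T = ind T0 \<longleftrightarrow> T = T0"
        using T0 inj_ind Cs_finite_elem by (metis inj_onD mem_Collect_eq)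
      then show "(if ind T = \<alpha> then 1 else 0) = (if T = T0 then 1 else (0::rat))" using T0 by simp
    qed
    also have "\<dots> = 1" using T0 finite_Cs by simp
    finally show ?thesis using True by simp
  next
    case False
    then show ?thesis by (auto intro!: sum.neutral)
  qed
  finally show ?thesis .
qed

lemma xdiff_op_esym: "xdiff_op (esym r p) f = (\<Sum>T\<in>Cs r p. xdiff_mono (ind T) f)"
proof -
  have keys: "Poly_Mapping.keys (esym r p) = ind ` Cs r p"
    by (auto simp: in_keys_iff lookup_esym split: if_splits)
  have "xdiff_op (esym r p) f = (\<Sum>\<alpha>\<in>ind ` Cs r p. xdiff_mono \<alpha> f)"
    unfolding xdiff_op_def keys by (rule sum.cong[OF refl]) (simp add: lookup_esym)
  also have "\<dots> = (\<Sum>T\<in>Cs r p. xdiff_mono (ind T) f)"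
    by (rule sum.reindex[unfolded comp_def]) (rule inj_on_subset[OF inj_ind], auto dest: Cs_finite_elem)
  finally show ?thesis .
qed

definition pairs :: "nat set \<Rightarrow> (nat \<times> nat) set" where
  "pairs S = {(v,w). v \<in> S \<and> w \<in> S \<and> v < w}"

definition psgn :: "nat set \<Rightarrow> (nat \<Rightarrow> nat) \<Rightarrow> int" where
  "psgn S a = sgn (\<Prod>(v,w)\<in>pairs S. int (a w) - int (a v))"

lemma sgn_prod_int: "sgn (\<Prod>x\<in>A. f x :: int) = (\<Prod>x\<in>A. sgn (f x))"
  by (induction A rule: infinite_finite_induct) (auto simp: sgn_mult)

lemma finite_pairs: "finite S \<Longrightarrow> finite (pairs S)"
  unfolding pairs_def by (rule finite_subset[of _ "S \<times> S"]) auto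

lemma psgn_remove:
  assumes S: "finite S" and j: "j \<in> S" and gt: "\<forall>v\<in>S - {j}. a j < a v"
  shows "psgn S a = (-1) ^ card {v\<in>S. v < j} * psgn (S - {j}) a"
proof -
  let ?f = "\<lambda>(v,w). int (a w) - int (a v)"
  have dec: "pairs S = pairs (S - {j}) \<union> (\<lambda>v. (v,j)) ` {v\<in>S. v < j} \<union> (\<lambda>w. (j,w)) ` {w\<in>S. j < w}"
    using j unfolding pairs_def by auto
  have fin1: "finite (pairs (S - {j}))" using S by (simp add: finite_pairs)
  have "prod ?f (pairs S) = prod ?f (pairs (S - {j})) * prod ?f ((\<lambda>v. (v,j)) ` {v\<in>S. v < j}) *
      prod ?f ((\<lambda>w. (j,w)) ` {w\<in>S. j < w})"
  proof -
    have A: "prod ?f (pairs (S - {j}) \<union> (\<lambda>v. (v,j)) ` {v\<in>S. v < j}) = prod ?f (pairs (S - {j})) * prod ?f ((\<lambda>v. (v,j)) ` {v\<in>S. v < j})"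
      by (rule prod.union_disjoint) (use S fin1 in \<open>auto simp: pairs_def\<close>)
    have B: "prod ?f (pairs (S - {j}) \<union> (\<lambda>v. (v,j)) ` {v\<in>S. v < j} \<union> (\<lambda>w. (j,w)) ` {w\<in>S. j < w}) =
       prod ?f (pairs (S - {j}) \<union> (\<lambda>v. (v,j)) ` {v\<in>S. v < j}) * prod ?f ((\<lambda>w. (j,w)) ` {w\<in>S. j < w})"
      by (rule prod.union_disjoint) (use S fin1 in \<open>auto simp: pairs_def\<close>)
    show ?thesis unfolding dec B A ..
  qed
  also have "prod ?f ((\<lambda>v. (v,j)) ` {v\<in>S. v < j}) = (\<Prod>v\<in>{v\<in>S. v < j}. int (a j) - int (a v))"
    by (subst prod.reindex) (auto simp: inj_on_def)
  also have "prod ?f ((\<lambda>w. (j,w)) ` {w\<in>S. j < w}) = (\<Prod>w\<in>{w\<in>S. j < w}. int (a w) - int (a j))"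
    by (subst prod.reindex) (auto simp: inj_on_def)
  finally have P: "prod ?f (pairs S) = prod ?f (pairs (S - {j})) * (\<Prod>v\<in>{v\<in>S. v < j}. int (a j) - int (a v)) *
      (\<Prod>w\<in>{w\<in>S. j < w}. int (a w) - int (a j))" .
  have s1: "sgn (\<Prod>v\<in>{v\<in>S. v < j}. int (a j) - int (a v)) = (-1) ^ card {v\<in>S. v < j}"
  proof -
    have "sgn (\<Prod>v\<in>{v\<in>S. v < j}. int (a j) - int (a v)) = (\<Prod>v\<in>{v\<in>S. v < j}. sgn (int (a j) - int (a v)))"
      by (rule sgn_prod_int)
    also have "\<dots> = (\<Prod>v\<in>{v\<in>S. v < j}. -1)"
      by (rule prod.cong) (use gt in auto)
    finally show ?thesis by simp
  qed
  have s2: "sgn (\<Prod>w\<in>{w\<in>S. j < w}. int (a w) - int (a j)) = 1"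
  proof -
    have "sgn (\<Prod>w\<in>{w\<in>S. j < w}. int (a w) - int (a j)) = (\<Prod>w\<in>{w\<in>S. j < w}. sgn (int (a w) - int (a j)))"
      by (rule sgn_prod_int)
    also have "\<dots> = (\<Prod>w\<in>{w\<in>S. j < w}. 1)"
      by (rule prod.cong) (use gt in auto)
    finally show ?thesis by simp
  qed
  show ?thesis unfolding psgn_def P sgn_mult s1 s2 by simp
qed

definition coef :: "nat \<Rightarrow> (nat \<Rightarrow> nat) \<Rightarrow> (nat \<Rightarrow> nat) \<Rightarrow> int" where
  "coef n h a = (-1) ^ inversions n h * psgn (xcols n a) a * int (\<Prod>l\<in>{1..n}. pf (h l) (a l))"

definition Pset :: "nat \<Rightarrow> nat list \<Rightarrow> nat set \<Rightarrow> ((nat \<Rightarrow> nat) \<times> (nat \<Rightarrow> nat)) set" where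
  "Pset n L S = {(h,a). h \<in> Hs n \<and> (\<forall>l. l \<notin> {1..n} \<longrightarrow> a l = 0) \<and> xcols n a = S \<and> inj_on a S \<and> a ` S = set L}"

definition G :: "nat \<Rightarrow> nat list \<Rightarrow> nat set \<Rightarrow> xpoly" where
  "G n L S = (\<Sum>(h,a)\<in>Pset n L S. Poly_Mapping.single (ex n (\<lambda>l. h l - a l)) (of_int (coef n h a)))"

lemma finite_Hs: "finite (Hs n)"
proof -
  have "Hs n \<subseteq> {f. \<forall>x. (x \<in> {1..n} \<longrightarrow> f x \<in> {0..<n}) \<and> (x \<notin> {1..n} \<longrightarrow> f x = 0)}"
    unfolding Hs_def by (auto dest: bij_betwE)
  then show ?thesis by (rule finite_subset) (rule finite_set_of_finite_funs, auto)
qed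

lemma finite_Pset: "finite (Pset n L S)"
proof -
  have "Pset n L S \<subseteq> Hs n \<times> {f. \<forall>x. (x \<in> {1..n} \<longrightarrow> f x \<in> insert 0 (set L)) \<and> (x \<notin> {1..n} \<longrightarrow> f x = 0)}"
    unfolding Pset_def xcols_def by auto
  then show ?thesis
    by (rule finite_subset) (intro finite_cartesian_product finite_Hs finite_set_of_finite_funs, auto)
qed

lemma xcols_finite: "finite (xcols n a)" unfolding xcols_def by auto

lemma single_of_int_mult: "of_int k * Poly_Mapping.single e (c::rat) = Poly_Mapping.single e (of_int k * c)"
  by (metis add_0 mult_single single_of_int)

lemma neg1_pow_single: "(-1::xpoly) ^ k * Poly_Mapping.single e c = Poly_Mapping.single e ((-1) ^ k * c)"
proof -
  have "(-1::xpoly) ^ k = of_int ((-1) ^ k)" by simp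
  then have "(-1::xpoly) ^ k * Poly_Mapping.single e c = Poly_Mapping.single e (of_int ((-1) ^ k) * c)"
    by (simp only: single_of_int_mult)
  then show ?thesis by simp
qed

lemma G_base: "G n [] S = xpart (Delta n) S"
proof -
  have P: "Pset n [] S = (if S = {} then (\<lambda>h. (h, \<lambda>_. 0)) ` Hs n else {})"
  proof (cases "S = {}")
    case True
    have "(h,a) \<in> Pset n [] S \<longleftrightarrow> (h,a) \<in> (\<lambda>h. (h, \<lambda>_. 0)) ` Hs n" for h a
    proof
      assume "(h,a) \<in> Pset n [] S"
      then have h: "h \<in> Hs n" and out: "\<forall>l. l \<notin> {1..n} \<longrightarrow> a l = 0" and xc: "xcols n a = {}"
        using True unfolding Pset_def by auto
      have "a = (\<lambda>_. 0)"
      proof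
        fix l show "a l = 0" using out xc unfolding xcols_def by (cases "l \<in> {1..n}") auto
      qed
      then show "(h,a) \<in> (\<lambda>h. (h, \<lambda>_. 0)) ` Hs n" using h by auto
    next
      assume "(h,a) \<in> (\<lambda>h. (h, \<lambda>_. 0)) ` Hs n"
      then show "(h,a) \<in> Pset n [] S" using True unfolding Pset_def xcols_def by auto
    qed
    then show ?thesis using True by auto
  next
    case False
    then show ?thesis unfolding Pset_def by auto
  qed
  show ?thesis
  proof (cases "S = {}")
    case True
    have "G n [] S = (\<Sum>h\<in>Hs n. Poly_Mapping.single (ex n h) (of_int ((-1) ^ inversions n h)))"
    proof -
      have P': "Pset n [] S = (\<lambda>h. (h, \<lambda>_. 0)) ` Hs n" using P True by simp
      show ?thesis unfolding G_def P'
        by (subst sum.reindex) (auto simp: inj_on_def coef_def xcols_def psgn_def pairs_def)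
    qed
    also have "\<dots> = Delta n"
      unfolding Delta_expand monoX_single
      by (rule sum.cong[OF refl]) (simp add: neg1_pow_single)
    finally show ?thesis using True by (simp add: xpart_def)
  next
    case False
    then show ?thesis unfolding G_def P by (simp add: xpart_def)
  qed
qed

lemma step_fwd:
  assumes P: "(h,a') \<in> Pset n L (S - {j})" and j: "j \<in> S" "j \<in> {1..n}"
    and i0: "0 < i" and gt: "\<forall>x\<in>set L. i < x"
  shows "(h, a'(j := i)) \<in> Pset n (i # L) S" "a' j = 0"
    "coef n h (a'(j := i)) = (-1) ^ card {s\<in>S. s < j} * int (pf (h j) i) * coef n h a'"
proof -
  let ?a = "a'(j := i)"
  have h: "h \<in> Hs n" and out: "\<forall>l. l \<notin> {1..n} \<longrightarrow> a' l = 0" and xc: "xcols n a' = S - {j}"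
    and inj: "inj_on a' (S - {j})" and im: "a' ` (S - {j}) = set L"
    using P unfolding Pset_def by auto
  show a0: "a' j = 0"
  proof (rule ccontr)
    assume "a' j \<noteq> 0"
    then have "j \<in> xcols n a'" using j(2) unfolding xcols_def by simp
    then show False using xc by simp
  qed
  have Ssub: "S \<subseteq> {1..n}"
  proof
    fix s assume s: "s \<in> S"
    show "s \<in> {1..n}"
    proof (cases "s = j")
      case True then show ?thesis using j(2) by simp
    next
      case False
      then have "s \<in> xcols n a'" using xc s by simp
      then show ?thesis unfolding xcols_def by simp
    qed
  qed
  have xca: "xcols n ?a = S"
  proof (rule Set.set_eqI)
    fix l show "l \<in> xcols n ?a \<longleftrightarrow> l \<in> S"
    proof (cases "l = j")
      case True then show ?thesis using j i0 unfolding xcols_def by simp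
    next
      case False
      then have "l \<in> xcols n ?a \<longleftrightarrow> l \<in> xcols n a'" unfolding xcols_def by simp
      also have "\<dots> \<longleftrightarrow> l \<in> S" using xc False by simp
      finally show ?thesis .
    qed
  qed
  have iL: "i \<notin> set L" using gt by auto
  have notin: "i \<notin> a' ` (S - {j})" using iL unfolding im .
  have inja: "inj_on ?a S"
  proof -
    have "inj_on ?a (insert j (S - {j}))"
      using inj notin by (auto simp: inj_on_def)
    then show ?thesis using j by (simp add: insert_absorb)
  qed
  have ima: "?a ` S = set (i # L)"
  proof -
    have "?a ` S = ?a ` (insert j (S - {j}))" using j by (simp add: insert_absorb)
    also have "\<dots> = insert i (a' ` (S - {j}))" by auto
    finally show ?thesis using im by simp
  qed
  show "(h, ?a) \<in> Pset n (i # L) S"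
    unfolding Pset_def using h out j xca inja ima by auto
  have ps: "psgn S ?a = (-1) ^ card {s\<in>S. s < j} * psgn (S - {j}) a'"
  proof -
    have fS: "finite S" using xca xcols_finite by metis
    have "psgn S ?a = (-1) ^ card {s\<in>S. s < j} * psgn (S - {j}) ?a"
    proof (rule psgn_remove[OF fS j(1)])
      show "\<forall>v\<in>S - {j}. ?a j < ?a v" using im gt by auto
    qed
    also have "psgn (S - {j}) ?a = psgn (S - {j}) a'"
      unfolding psgn_def by (rule arg_cong[where f = sgn], rule prod.cong) (auto simp: pairs_def)
    finally show ?thesis .
  qed
  have pr: "(\<Prod>l\<in>{1..n}. pf (h l) (?a l)) = pf (h j) i * (\<Prod>l\<in>{1..n}. pf (h l) (a' l))"
  proof -
    have "(\<Prod>l\<in>{1..n}. pf (h l) (?a l)) = pf (h j) (?a j) * (\<Prod>l\<in>{1..n} - {j}. pf (h l) (?a l))"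
      using j by (subst prod.remove) auto
    also have "(\<Prod>l\<in>{1..n} - {j}. pf (h l) (?a l)) = (\<Prod>l\<in>{1..n} - {j}. pf (h l) (a' l))"
      by (rule prod.cong) auto
    also have "\<dots> = pf (h j) (a' j) * (\<Prod>l\<in>{1..n} - {j}. pf (h l) (a' l))" using a0 by simp
    also have "\<dots> = (\<Prod>l\<in>{1..n}. pf (h l) (a' l))"
      using j by (subst (2) prod.remove) auto
    finally show ?thesis by simp
  qed
  show "coef n h ?a = (-1) ^ card {s\<in>S. s < j} * int (pf (h j) i) * coef n h a'"
    unfolding coef_def xca xc ps pr by (simp add: algebra_simps)
qed

lemma step_bwd:
  assumes P: "(h,a) \<in> Pset n (i # L) S" and dL: "distinct (i # L)"
  shows "\<exists>!j. j \<in> S \<and> a j = i"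
    "j \<in> S \<Longrightarrow> a j = i \<Longrightarrow> j \<in> {1..n} \<and> (h, a(j := 0)) \<in> Pset n L (S - {j})"
proof -
  have h: "h \<in> Hs n" and out: "\<forall>l. l \<notin> {1..n} \<longrightarrow> a l = 0" and xc: "xcols n a = S"
    and inj: "inj_on a S" and im: "a ` S = set (i # L)"
    using P unfolding Pset_def by auto
  show "\<exists>!j. j \<in> S \<and> a j = i"
  proof -
    have "i \<in> a ` S" unfolding im by simp
    then obtain j where j: "j \<in> S" "a j = i" by blast
    have "j' = j" if "j' \<in> S" "a j' = i" for j'
      using inj_onD[OF inj _ that(1) j(1)] that j by simp
    then show ?thesis using j by blast
  qed
  assume j: "j \<in> S" "a j = i"
  show "j \<in> {1..n} \<and> (h, a(j := 0)) \<in> Pset n L (S - {j})"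
  proof
    have "j \<in> xcols n a" using j(1) xc by simp
    then show "j \<in> {1..n}" unfolding xcols_def by simp
    have xc': "xcols n (a(j := 0)) = S - {j}"
    proof (rule Set.set_eqI)
      fix l show "l \<in> xcols n (a(j := 0)) \<longleftrightarrow> l \<in> S - {j}"
      proof (cases "l = j")
        case True then show ?thesis unfolding xcols_def by simp
      next
        case False
        then have "l \<in> xcols n (a(j := 0)) \<longleftrightarrow> l \<in> xcols n a" unfolding xcols_def by simp
        then show ?thesis using xc False by simp
      qed
    qed
    have inj': "inj_on (a(j := 0)) (S - {j})"
    proof -
      have "inj_on a (S - {j})" using inj by (rule inj_on_subset) auto
      moreover have "\<forall>x\<in>S - {j}. (a(j := 0)) x = a x" by simp
      ultimately show ?thesis using inj_on_cong by metis
    qed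
    have "(a(j := 0)) ` (S - {j}) = a ` (S - {j})" by (rule image_cong) auto
    also have "\<dots> = a ` S - {a j}" using inj_on_image_set_diff[OF inj, of S "{j}"] j(1) by simp
    also have "\<dots> = set L" unfolding im using j(2) dL by auto
    finally have im': "(a(j := 0)) ` (S - {j}) = set L" .
    show "(h, a(j := 0)) \<in> Pset n L (S - {j})"
      unfolding Pset_def using h out xc' inj' im' by simp
  qed
qed

lemma G_step:
  assumes i0: "0 < i" and gt: "\<forall>x\<in>set L. i < x" and dL: "distinct L"
  shows "dop n i (G n L) S = G n (i # L) S"
proof -
  define F where "F = (\<lambda>(j::nat, h::nat\<Rightarrow>nat, a'::nat\<Rightarrow>nat). (-1::xpoly) ^ card {s\<in>S. s < j} *
     (xderiv j ^^ i) (Poly_Mapping.single (ex n (\<lambda>l. h l - a' l)) (of_int (coef n h a'))))"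
  define jj where "jj = (\<lambda>a::nat\<Rightarrow>nat. THE j. j \<in> S \<and> a j = i)"
  have dL': "distinct (i # L)" using dL gt by auto
  have "dop n i (G n L) S = (\<Sum>j\<in>{1..n}. if j \<in> S then (\<Sum>x\<in>Pset n L (S - {j}). F (j, x)) else 0)"
    unfolding dop_def theta_mult_def
  proof (rule sum.cong[OF refl])
    fix j assume "j \<in> {1..n}"
    show "(if j \<in> S then (-1) ^ card {s\<in>S. s < j} * (xderiv j ^^ i) (G n L (S - {j})) else 0) =
          (if j \<in> S then (\<Sum>x\<in>Pset n L (S - {j}). F (j, x)) else 0)"
      unfolding G_def funpow_xderiv_sum sum_distrib_left F_def by (simp add: case_prod_beta)
  qed
  also have "\<dots> = (\<Sum>j\<in>{1..n} \<inter> S. \<Sum>x\<in>Pset n L (S - {j}). F (j, x))"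
    by (rule sum.inter_restrict[symmetric]) simp
  also have "\<dots> = (\<Sum>p\<in>Sigma ({1..n} \<inter> S) (\<lambda>j. Pset n L (S - {j})). F p)"
    by (subst sum.Sigma) (auto simp: finite_Pset)
  also have "\<dots> = G n (i # L) S"
    unfolding G_def
  proof (rule sum.reindex_bij_witness[of _ "\<lambda>(h,a). (jj a, h, a(jj a := 0))" "\<lambda>(j,h,a'). (h, a'(j := i))"])
    fix p assume p: "p \<in> Sigma ({1..n} \<inter> S) (\<lambda>j. Pset n L (S - {j}))"
    then obtain j h a' where pj: "p = (j, h, a')" and j: "j \<in> {1..n}" "j \<in> S"
      and P: "(h, a') \<in> Pset n L (S - {j})" by auto
    note fw = step_fwd[OF P j(2) j(1) i0 gt]
    have jjv: "jj (a'(j := i)) = j"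
    proof -
      have "\<exists>!k. k \<in> S \<and> (a'(j := i)) k = i" by (rule step_bwd(1)[OF fw(1) dL'])
      then show ?thesis unfolding jj_def using j by (intro the1_equality) auto
    qed
    show "(\<lambda>(h,a). (jj a, h, a(jj a := 0))) ((\<lambda>(j,h,a'). (h, a'(j := i))) p) = p"
      unfolding pj using jjv fw(2) by auto
    show "(\<lambda>(j,h,a'). (h, a'(j := i))) p \<in> Pset n (i # L) S" unfolding pj using fw(1) by simp
    have lk: "Poly_Mapping.lookup (ex n (\<lambda>l. h l - a' l)) j = h j" using j fw(2) by (simp add: lookup_ex)
    have Fp: "F (j, h, a') = Poly_Mapping.single (ex n (\<lambda>l. h l - a' l) - Poly_Mapping.single j i)
       ((-1) ^ card {s\<in>S. s < j} * (of_nat (pf (h j) i) * of_int (coef n h a')))"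
      unfolding F_def by (simp add: xderiv_pow_single lk neg1_pow_single)
    have cf: "(of_int (coef n h (a'(j := i))) :: rat) = (-1) ^ card {s\<in>S. s < j} * (of_nat (pf (h j) i) * of_int (coef n h a'))"
      unfolding fw(3) by simp
    show "(\<lambda>(h,a). Poly_Mapping.single (ex n (\<lambda>l. h l - a l)) (of_int (coef n h a))) ((\<lambda>(j,h,a'). (h, a'(j := i))) p) = F p"
    proof (cases "pf (h j) i = 0")
      case True
      then show ?thesis unfolding pj Fp using cf by simp
    next
      case False
      then have ih: "i \<le> h j" unfolding pf_def by (auto split: if_splits)
      have "ex n (\<lambda>l. h l - a' l) - Poly_Mapping.single j i = ex n (\<lambda>l. h l - (a'(j := i)) l)"
        by (rule poly_mapping_eqI) (use j fw(2) ih in \<open>auto simp: lookup_minus lookup_ex lookup_single when_def\<close>)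
      then show ?thesis unfolding pj Fp using cf by simp
    qed
  next
    fix b assume b: "b \<in> Pset n (i # L) S"
    then obtain h a where bj: "b = (h, a)" and P: "(h, a) \<in> Pset n (i # L) S" by (cases b) auto
    have ex1: "\<exists>!j. j \<in> S \<and> a j = i" by (rule step_bwd(1)[OF P dL'])
    have "jj a \<in> S \<and> a (jj a) = i" unfolding jj_def by (rule theI'[OF ex1])
    then have jS: "jj a \<in> S" "a (jj a) = i" by simp_all
    show "(\<lambda>(j,h,a'). (h, a'(j := i))) ((\<lambda>(h,a). (jj a, h, a(jj a := 0))) b) = b"
      unfolding bj using jS by auto
    show "(\<lambda>(h,a). (jj a, h, a(jj a := 0))) b \<in> Sigma ({1..n} \<inter> S) (\<lambda>j. Pset n L (S - {j}))"
      unfolding bj using step_bwd(2)[OF P dL' jS] jS by auto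
  qed
  finally show ?thesis .
qed

lemma foldr_G:
  assumes "sorted_wrt (<) L" "\<forall>x\<in>set L. 0 < x"
  shows "foldr (dop n) L (xpart (Delta n)) = G n L"
  using assms
proof (induction L)
  case Nil
  show ?case by (rule ext) (simp add: G_base)
next
  case (Cons i L)
  have IH: "foldr (dop n) L (xpart (Delta n)) = G n L" using Cons by simp
  have gt: "\<forall>x\<in>set L. i < x" using Cons.prems by simp
  have dL: "distinct L" using Cons.prems by (simp add: strict_sorted_iff)
  show ?case
    by (rule ext) (use IH G_step[OF _ gt dL] Cons.prems in simp)
qed

lemma mset_iff:
  assumes S: "finite S" and I: "finite I"
  shows "image_mset a (mset_set S) = mset_set I \<longleftrightarrow> inj_on a S \<and> a ` S = I"
proof
  assume eq: "image_mset a (mset_set S) = mset_set I"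
  have im: "a ` S = I"
  proof -
    have "set_mset (image_mset a (mset_set S)) = set_mset (mset_set I)" using eq by simp
    then show ?thesis using S I by simp
  qed
  have "size (image_mset a (mset_set S)) = size (mset_set I)" using eq by simp
  then have "card S = card I" by simp
  then have "card (a ` S) = card S" using im by simp
  then have "inj_on a S" using S by (rule eq_card_imp_inj_on[rotated])
  then show "inj_on a S \<and> a ` S = I" using im by simp
next
  assume "inj_on a S \<and> a ` S = I"
  then show "image_mset a (mset_set S) = mset_set I" by (simp add: image_mset_mset_set)
qed

lemma finite_marked: "finite (marked_staircases n m)"
proof -
  let ?F = "\<lambda>B. {f. \<forall>x. (x \<in> {1..n} \<longrightarrow> f x \<in> B) \<and> (x \<notin> {1..n} \<longrightarrow> f x = (0::nat))}"
  have "marked_staircases n m \<subseteq> ?F {0..<n} \<times> ?F {0..<n} \<times> ?F {0..1}"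
  proof
    fix M assume M: "M \<in> marked_staircases n m"
    obtain h a b where Mh: "M = (h,a,b)" by (cases M)
    have bij: "bij_betw h {1..n} {0..<n}" and out: "\<forall>l. l \<notin> {1..n} \<longrightarrow> h l = 0 \<and> a l = 0 \<and> b l = 0"
      and cond: "\<forall>l\<in>{1..n}. b l \<le> 1 \<and> a l + b l \<le> h l"
      using M unfolding Mh marked_staircases_def by auto
    have hl: "h l < n" if "l \<in> {1..n}" for l using bij_betwE[OF bij] that by auto
    have al: "a l < n" if "l \<in> {1..n}" for l using hl[OF that] cond that by fastforce
    show "M \<in> ?F {0..<n} \<times> ?F {0..<n} \<times> ?F {0..1}"
      unfolding Mh using hl al out cond by auto
  qed
  then show ?thesis
    by (rule finite_subset) (intro finite_cartesian_product finite_set_of_finite_funs; simp)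
qed

definition indf :: "nat set \<Rightarrow> nat \<Rightarrow> nat" where
  "indf T l = (if l \<in> T then 1 else 0)"

lemma sum_indf: "T \<subseteq> A \<Longrightarrow> finite A \<Longrightarrow> (\<Sum>l\<in>A. indf T l) = card T"
  unfolding indf_def by (simp add: sum.If_cases Int_absorb1)

lemma order_split:
  assumes "\<forall>l\<in>{1..n}. a l + indf T l \<le> h l" "T \<subseteq> {1..n}"
  shows "stair_order n h a (indf T) = (\<Prod>l\<in>{1..n}. pf (h l) (a l)) * (\<Prod>s\<in>T. h s - a s)"
proof -
  have "stair_order n h a (indf T) = (\<Prod>l\<in>{1..n}. pf (h l) (a l) * (if l \<in> T then h l - a l else 1))"
    unfolding stair_order_def
  proof (rule prod.cong[OF refl])
    fix l assume l: "l \<in> {1..n}"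
    have le: "a l + indf T l \<le> h l" using assms l by auto
    show "(\<Prod>t\<in>{h l - a l - indf T l<..h l}. t) = pf (h l) (a l) * (if l \<in> T then h l - a l else 1)"
    proof (cases "l \<in> T")
      case True
      then have "{h l - a l - indf T l<..h l} = insert (h l - a l) {h l - a l<..h l}"
        using le by (auto simp: indf_def)
      then show ?thesis using True le by (simp add: indf_def pf_def)
    next
      case False
      then show ?thesis using le by (simp add: indf_def pf_def)
    qed
  qed
  also have "\<dots> = (\<Prod>l\<in>{1..n}. pf (h l) (a l)) * (\<Prod>l\<in>{1..n}. if l \<in> T then h l - a l else 1)"
    by (rule prod.distrib)
  also have "(\<Prod>l\<in>{1..n}. if l \<in> T then h l - a l else 1) = (\<Prod>s\<in>T. h s - a s)"
    using assms(2) by (simp add: prod.If_cases Int_absorb1)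
  finally show ?thesis .
qed

theorem lemma4p5:
  fixes n m r :: nat and I :: "nat set"
  assumes "I \<subseteq> {1..n-1}" and "m \<le> n"
  shows "sdiff_op (esym r (n - m))
           (foldr (dop n) (sorted_list_of_set I) (xpart (Delta n)))
         = (\<lambda>S. \<Sum>M\<in>{(h, a, b) \<in> marked_staircases n m.
                      (\<Sum>l\<in>{1..n}. b l) = r \<and>
                      image_mset a (mset_set (xcols n a)) = mset_set I}.
                 stair_weight n M S)"
proof (rule ext)
  fix S
  define L where "L = sorted_list_of_set I"
  define p where "p = n - m"
  have finI: "finite I" using assms(1) by (rule finite_subset) simp
  have setL: "set L = I" unfolding L_def using finI by simp
  have sortedL: "sorted_wrt (<) L" unfolding L_def by (rule strict_sorted_list_of_set)
  have posL: "\<forall>x\<in>set L. 0 < x" using setL assms(1) by auto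
  have fold: "foldr (dop n) L (xpart (Delta n)) = G n L" by (rule foldr_G[OF sortedL posL])
  have pn: "p \<le> n" unfolding p_def by simp
  have CsT: "finite T \<and> T \<subseteq> {1..n}" if "T \<in> Cs r p" for T
    using that pn Cs_finite_elem[OF that] unfolding Cs_def by auto
  define Mset where "Mset = {(h, a, b) \<in> marked_staircases n m.
                      (\<Sum>l\<in>{1..n}. b l) = r \<and>
                      image_mset a (mset_set (xcols n a)) = mset_set I}"
  define W where "W = (\<lambda>(T::nat set, h::nat\<Rightarrow>nat, a::nat\<Rightarrow>nat).
     Poly_Mapping.single (ex n (\<lambda>l. h l - a l) - ind T)
       (of_nat (\<Prod>s\<in>T. h s - a s) * (of_int (coef n h a) :: rat)))"
  define D where "D = {x \<in> Sigma (Cs r p) (\<lambda>_. Pset n L S).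
     case x of (T, h, a) \<Rightarrow> \<forall>l\<in>{1..n}. a l + indf T l \<le> h l}"
  define MS where "MS = {M \<in> Mset. case M of (h, a, b) \<Rightarrow> xcols n a = S}"
  define V where "V = (\<lambda>(h::nat\<Rightarrow>nat, a::nat\<Rightarrow>nat, b::nat\<Rightarrow>nat).
     Poly_Mapping.single (ex n (\<lambda>l. h l - a l - b l)) (of_int (stair_sign n h a * int (stair_order n h a b)) :: rat))"
  have finSig: "finite (Sigma (Cs r p) (\<lambda>_. Pset n L S))"
    by (intro finite_SigmaI finite_Cs finite_Pset)
  have "sdiff_op (esym r (n - m)) (foldr (dop n) (sorted_list_of_set I) (xpart (Delta n))) S
      = xdiff_op (esym r p) (G n L S)"
    unfolding sdiff_op_def p_def L_def[symmetric] fold ..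
  also have "\<dots> = (\<Sum>T\<in>Cs r p. xdiff_mono (ind T) (G n L S))" by (rule xdiff_op_esym)
  also have "\<dots> = (\<Sum>T\<in>Cs r p. \<Sum>x\<in>Pset n L S. W (T, x))"
  proof (rule sum.cong[OF refl])
    fix T assume T: "T \<in> Cs r p"
    show "xdiff_mono (ind T) (G n L S) = (\<Sum>x\<in>Pset n L S. W (T, x))"
      unfolding G_def xdiff_mono_sum
    proof (rule sum.cong[OF refl])
      fix x assume "x \<in> Pset n L S"
      obtain h a where x: "x = (h, a)" by (cases x)
      have "(\<Prod>s\<in>T. Poly_Mapping.lookup (ex n (\<lambda>l. h l - a l)) s) = (\<Prod>s\<in>T. h s - a s)"
        by (rule prod.cong[OF refl]) (use CsT[OF T] in \<open>auto simp: lookup_ex\<close>)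
      then show "xdiff_mono (ind T) ((\<lambda>(h, a). Poly_Mapping.single (ex n (\<lambda>l. h l - a l)) (of_int (coef n h a))) x) = W (T, x)"
        unfolding x W_def using CsT[OF T] by (simp add: xdiff_mono_ind)
    qed
  qed
  also have "\<dots> = (\<Sum>x\<in>Sigma (Cs r p) (\<lambda>_. Pset n L S). W x)"
    by (subst sum.Sigma) (auto simp: finite_Cs finite_Pset)
  also have "\<dots> = (\<Sum>x\<in>D. W x)"
  proof (rule sum.mono_neutral_right[OF finSig])
    show "D \<subseteq> Sigma (Cs r p) (\<lambda>_. Pset n L S)" unfolding D_def by auto
    show "\<forall>x\<in>Sigma (Cs r p) (\<lambda>_. Pset n L S) - D. W x = 0"
    proof
      fix x assume xs: "x \<in> Sigma (Cs r p) (\<lambda>_. Pset n L S) - D"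
      obtain T h a where x: "x = (T, h, a)" by (cases x) auto
      have T: "T \<in> Cs r p" using xs x by auto
      obtain l where l: "l \<in> {1..n}" "\<not> a l + indf T l \<le> h l" using xs x unfolding D_def by auto
      have zc: "of_nat (\<Prod>s\<in>T. h s - a s) * (of_int (coef n h a) :: rat) = 0"
      proof (cases "h l < a l")
        case True
        then have "pf (h l) (a l) = 0" unfolding pf_def by simp
        then have "(\<Prod>l\<in>{1..n}. pf (h l) (a l)) = 0" using l(1) by (auto intro: prod_zero)
        then show ?thesis unfolding coef_def by simp
      next
        case False
        then have "l \<in> T" "h l - a l = 0" using l(2) unfolding indf_def by (auto split: if_splits)
        then have "(\<Prod>s\<in>T. h s - a s) = 0" using CsT[OF T] by (auto intro: prod_zero)
        then show ?thesis by simp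
      qed
      show "W x = 0" unfolding x W_def by (simp only: prod.case zc single_zero)
    qed
  qed
  also have "\<dots> = (\<Sum>M\<in>MS. V M)"
  proof (rule sum.reindex_bij_witness[of _ "\<lambda>(h,a,b). ({l. b l = 1}, h, a)" "\<lambda>(T,h,a). (h, a, indf T)"])
    fix x assume xD: "x \<in> D"
    obtain T h a where x: "x = (T, h, a)" by (cases x) auto
    have T: "T \<in> Cs r p" and P: "(h, a) \<in> Pset n L S" and le: "\<forall>l\<in>{1..n}. a l + indf T l \<le> h l"
      using xD unfolding x D_def by auto
    have Tfin: "finite T" and Tsub: "T \<subseteq> {1..n}" using CsT[OF T] by auto
    have Tp: "T \<subseteq> {1..p}" "card T = r" using T unfolding Cs_def by auto
    have h: "h \<in> Hs n" and out: "\<forall>l. l \<notin> {1..n} \<longrightarrow> a l = 0" and xc: "xcols n a = S"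
      and inj: "inj_on a S" and im: "a ` S = set L"
      using P unfolding Pset_def by auto
    show "(\<lambda>(h,a,b). ({l. b l = 1}, h, a)) ((\<lambda>(T,h,a). (h, a, indf T)) x) = x"
      unfolding x by (auto simp: indf_def)
    have mk: "(h, a, indf T) \<in> marked_staircases n m"
      unfolding marked_staircases_def
    proof (clarify, intro conjI)
      show "bij_betw h {1..n} {0..<n}" using h unfolding Hs_def by auto
      show "\<forall>l. l \<notin> {1..n} \<longrightarrow> h l = 0 \<and> a l = 0 \<and> indf T l = 0"
        using h out Tsub unfolding Hs_def indf_def by auto
      show "\<forall>l\<in>{1..n}. indf T l \<le> 1 \<and> a l + indf T l \<le> h l \<and> (n - m < l \<longrightarrow> indf T l = 0)"
        using le Tp(1) unfolding indf_def p_def by auto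
    qed
    have sumb: "(\<Sum>l\<in>{1..n}. indf T l) = r" using sum_indf[OF Tsub] Tp(2) by simp
    have ms: "image_mset a (mset_set (xcols n a)) = mset_set I"
      using mset_iff[OF xcols_finite[of n a] finI] xc inj im setL by simp
    show "(\<lambda>(T,h,a). (h, a, indf T)) x \<in> MS"
      unfolding x MS_def Mset_def using mk sumb ms xc by simp
    have ex: "ex n (\<lambda>l. h l - a l) - ind T = ex n (\<lambda>l. h l - a l - indf T l)"
      by (rule poly_mapping_eqI) (use Tfin Tsub in \<open>auto simp: lookup_minus lookup_ex lookup_ind indf_def\<close>)
    have ss: "stair_sign n h a = (-1) ^ inversions n h * psgn (xcols n a) a"
      unfolding stair_sign_def psgn_def pairs_def ..
    have so: "stair_order n h a (indf T) = (\<Prod>l\<in>{1..n}. pf (h l) (a l)) * (\<Prod>s\<in>T. h s - a s)"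
      by (rule order_split[OF le Tsub])
    show "V ((\<lambda>(T,h,a). (h, a, indf T)) x) = W x"
      unfolding x V_def W_def by (simp add: ex ss so coef_def mult_ac)
  next
    fix y assume yM: "y \<in> MS"
    obtain h a b where y: "y = (h, a, b)" by (cases y) auto
    have mk: "(h, a, b) \<in> marked_staircases n m" and sumb: "(\<Sum>l\<in>{1..n}. b l) = r"
      and ms: "image_mset a (mset_set (xcols n a)) = mset_set I" and xc: "xcols n a = S"
      using yM unfolding y MS_def Mset_def by auto
    have bij: "bij_betw h {1..n} {0..<n}" and out: "\<forall>l. l \<notin> {1..n} \<longrightarrow> h l = 0 \<and> a l = 0 \<and> b l = 0"
      and cond: "\<forall>l\<in>{1..n}. b l \<le> 1 \<and> a l + b l \<le> h l \<and> (l > n - m \<longrightarrow> b l = 0)"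
      using mk unfolding marked_staircases_def by auto
    have bT: "indf {l. b l = 1} = b"
    proof
      fix l show "indf {l. b l = 1} l = b l"
        using out cond unfolding indf_def by (cases "l \<in> {1..n}") (auto simp: le_Suc_eq)
    qed
    show "(\<lambda>(T,h,a). (h, a, indf T)) ((\<lambda>(h,a,b). ({l. b l = 1}, h, a)) y) = y"
      unfolding y using bT by simp
    have Tsub: "{l. b l = 1} \<subseteq> {1..p}"
    proof
      fix l assume "l \<in> {l. b l = 1}"
      then have b1: "b l = 1" by simp
      then have "l \<in> {1..n}" using out by (metis zero_neq_one)
      moreover have "\<not> n - m < l"
      proof
        assume "n - m < l"
        then have "b l = 0" using cond \<open>l \<in> {1..n}\<close> by blast
        then show False using b1 by simp
      qed
      ultimately show "l \<in> {1..p}" unfolding p_def by auto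
    qed
    have Tsub': "{l. b l = 1} \<subseteq> {1..n}" using Tsub pn by auto
    have "card {l. b l = 1} = r"
      using sum_indf[OF Tsub' finite_atLeastAtMost] bT sumb by simp
    then have TC: "{l. b l = 1} \<in> Cs r p" unfolding Cs_def using Tsub by simp
    have ia: "inj_on a S \<and> a ` S = set L"
      using mset_iff[OF xcols_finite[of n a] finI] ms xc setL by simp
    have P: "(h, a) \<in> Pset n L S" unfolding Pset_def Hs_def using bij out xc ia by auto
    show "(\<lambda>(h,a,b). ({l. b l = 1}, h, a)) y \<in> D"
      unfolding y D_def using TC P cond bT by auto
  qed
  also have "\<dots> = (\<Sum>M\<in>Mset. if (case M of (h, a, b) \<Rightarrow> xcols n a = S) then V M else 0)"
    unfolding MS_def
    by (rule sum.inter_filter) (rule finite_subset[OF _ finite_marked], auto simp: Mset_def)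
  also have "\<dots> = (\<Sum>M\<in>Mset. stair_weight n M S)"
  proof (rule sum.cong[OF refl])
    fix M assume "M \<in> Mset"
    obtain h a b where M: "M = (h, a, b)" by (cases M) auto
    have "of_int (stair_sign n h a * int (stair_order n h a b)) * (\<Prod>l\<in>{1..n}. X l ^ (h l - a l - b l))
       = Poly_Mapping.single (ex n (\<lambda>l. h l - a l - b l)) (of_int (stair_sign n h a * int (stair_order n h a b)))"
    proof -
      have e1: "(\<Prod>l\<in>{1..n}. X l ^ (h l - a l - b l)) = Poly_Mapping.single (ex n (\<lambda>l. h l - a l - b l)) 1"
        using monoX_single[of n "\<lambda>l. h l - a l - b l", unfolded monoX_def] .
      show ?thesis unfolding e1 by (simp only: single_of_int_mult mult_1_right)
    qed
    then show "(if (case M of (h, a, b) \<Rightarrow> xcols n a = S) then V M else 0) = stair_weight n M S"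
      unfolding M V_def stair_weight_def by auto
  qed
  finally show "sdiff_op (esym r (n - m)) (foldr (dop n) (sorted_list_of_set I) (xpart (Delta n))) S =
      (\<lambda>S. \<Sum>M\<in>{(h, a, b) \<in> marked_staircases n m.
                      (\<Sum>l\<in>{1..n}. b l) = r \<and>
                      image_mset a (mset_set (xcols n a)) = mset_set I}.
                 stair_weight n M S) S"
    unfolding Mset_def by simp
qed

end
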